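(* Consider the stochastic rested bandit model in the context, fix an arm $i$, a time budget $T$, a window function $h:\mathbb{N}\to\mathbb{N}$ with $h(n)\le\lfloor n/2\rfloor$ for all $n$, and $a>0$. For $n$ with $h(n)\ge1$ define $$\check\mu_i^T(n)=\frac{1}{h(n)}\sum_{l=n-h(n)+1}^{n}\Big(X_i(l)+(T-l)\frac{X_i(l)-X_i(l-h(n))}{h(n)}\Big),\quad \widetilde\mu_i^T(n)=\frac{1}{h(n)}\sum_{l=n-h(n)+1}^{n}\Big(\mu_i(l)+(T-l)\frac{\mu_i(l)-\mu_i(l-h(n))}{h(n)}\Big),$$ $$\check\beta_i^T(n)=\sigma\,(T-n+h(n)-1)\sqrt{\frac{a}{h(n)^3}}.$$ Then, for any arm-selection strategy, $$\Pr\Big(\exists t\in\{1,\dots,T\}:\ h(N_{i,t-1})\ge1\ \text{and}\ \big|\check\mu_i^T(N_{i,t-1})-\widetilde\mu_i^T(N_{i,t-1})\big|>\check\beta_i^T(N_{i,t-1})\Big)\le 2T\exp\Big(-\frac{a}{10}\Big).$$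
   Context: Model: $K$ arms, time budget $T$. At each round $t\in\{1,\dots,T\}$ an arm $I_t$ is chosen (based on the past) and the reward $x_t=\mu_{I_t}(N_{I_t,t})+\eta_t$ is observed, where $N_{i,t}=\sum_{\tau=1}^t\mathbb{1}\{I_\tau=i\}$ (with $N_{i,0}=0$), $\mu_i(n)$ is the expected reward of arm $i$ at its $n$-th pull, and $\eta_t$ is zero-mean and $\sigma^2$-subgaussian conditionally on the past ($\mathbb{E}[e^{\xi\eta_t}\mid\text{past}]\le e^{\sigma^2\xi^2/2}$ for all $\xi$). $X_i(l)$ denotes the reward observed at the $l$-th pull of arm $i$. (When $h(n)=0$ the paper sets these quantities to $+\infty$ and such rounds are excluded from the event.) *)

theory Defs
  imports "HOL-Probability.Probability"
begin

definition pulls :: "(nat \<Rightarrow> 'w \<Rightarrow> nat) \<Rightarrow> nat \<Rightarrow> nat \<Rightarrow> 'w \<Rightarrow> nat" where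
  "pulls I i t \<omega> = card {\<tau> \<in> {1..t}. I \<tau> \<omega> = i}"

definition reward :: "(nat \<Rightarrow> nat \<Rightarrow> real) \<Rightarrow> (nat \<Rightarrow> 'w \<Rightarrow> nat) \<Rightarrow> (nat \<Rightarrow> 'w \<Rightarrow> real)
    \<Rightarrow> nat \<Rightarrow> 'w \<Rightarrow> real" where
  "reward mu I eta t \<omega> = mu (I t \<omega>) (pulls I (I t \<omega>) t \<omega>) + eta t \<omega>"

definition pull_time :: "(nat \<Rightarrow> 'w \<Rightarrow> nat) \<Rightarrow> nat \<Rightarrow> nat \<Rightarrow> 'w \<Rightarrow> nat" where
  "pull_time I i l \<omega> = (LEAST \<tau>. 1 \<le> \<tau> \<and> I \<tau> \<omega> = i \<and> pulls I i \<tau> \<omega> = l)"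

definition Xobs :: "(nat \<Rightarrow> nat \<Rightarrow> real) \<Rightarrow> (nat \<Rightarrow> 'w \<Rightarrow> nat) \<Rightarrow> (nat \<Rightarrow> 'w \<Rightarrow> real)
    \<Rightarrow> nat \<Rightarrow> nat \<Rightarrow> 'w \<Rightarrow> real" where
  "Xobs mu I eta i l \<omega> = reward mu I eta (pull_time I i l \<omega>) \<omega>"

definition window_est :: "nat \<Rightarrow> (nat \<Rightarrow> nat) \<Rightarrow> (nat \<Rightarrow> real) \<Rightarrow> nat \<Rightarrow> real" where
  "window_est T h Y n =
     (1 / real (h n)) * (\<Sum>l \<in> {n - h n + 1..n}.
        Y l + (real T - real l) * (Y l - Y (l - h n)) / real (h n))"

definition check_mu :: "(nat \<Rightarrow> nat \<Rightarrow> real) \<Rightarrow> (nat \<Rightarrow> 'w \<Rightarrow> nat) \<Rightarrow> (nat \<Rightarrow> 'w \<Rightarrow> real)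
    \<Rightarrow> nat \<Rightarrow> nat \<Rightarrow> (nat \<Rightarrow> nat) \<Rightarrow> nat \<Rightarrow> 'w \<Rightarrow> real" where
  "check_mu mu I eta i T h n \<omega> = window_est T h (\<lambda>l. Xobs mu I eta i l \<omega>) n"

definition tilde_mu :: "(nat \<Rightarrow> nat \<Rightarrow> real) \<Rightarrow> nat \<Rightarrow> nat \<Rightarrow> (nat \<Rightarrow> nat) \<Rightarrow> nat \<Rightarrow> real" where
  "tilde_mu mu i T h n = window_est T h (mu i) n"

definition check_beta :: "real \<Rightarrow> real \<Rightarrow> nat \<Rightarrow> (nat \<Rightarrow> nat) \<Rightarrow> nat \<Rightarrow> real" where
  "check_beta \<sigma> a T h n =
     \<sigma> * (real T - real n + real (h n) - 1) * sqrt (a / real (h n) ^ 3)"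

end

theory Submission
  imports Defs
begin

lemma pulls_0[simp]: "pulls I i 0 \<omega> = 0"
  by (simp add: pulls_def)

lemma pulls_Suc: "pulls I i (Suc t) \<omega> = pulls I i t \<omega> + (if I (Suc t) \<omega> = i then 1 else 0)"
proof -
  have "{\<tau> \<in> {1..Suc t}. I \<tau> \<omega> = i} = {\<tau> \<in> {1..t}. I \<tau> \<omega> = i} \<union> (if I (Suc t) \<omega> = i then {Suc t} else {})"
    by (auto simp: le_Suc_eq)
  then show ?thesis unfolding pulls_def by (auto simp: card_insert_if)
qed

lemma pulls_mono: "s \<le> t \<Longrightarrow> pulls I i s \<omega> \<le> pulls I i t \<omega>"
  unfolding pulls_def by (rule card_mono) auto

lemma pulls_le: "pulls I i t \<omega> \<le> t"
  unfolding pulls_def by (rule order.trans[OF card_mono[of "{1..t}"]]) auto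

lemma pulls_strict:
  assumes "s < t" "I t \<omega> = i"
  shows "pulls I i s \<omega> < pulls I i t \<omega>"
proof -
  obtain u where t: "t = Suc u" using assms(1) by (cases t) auto
  have "pulls I i s \<omega> \<le> pulls I i u \<omega>" using assms t by (intro pulls_mono) auto
  then show ?thesis using assms t pulls_Suc[of I i u \<omega>] by simp
qed

lemma pulls_pos: "1 \<le> t \<Longrightarrow> I t \<omega> = i \<Longrightarrow> 1 \<le> pulls I i t \<omega>"
  using pulls_strict[of 0 t I \<omega> i] by simp

lemma pull_time_eq:
  assumes "1 \<le> \<tau>" "I \<tau> \<omega> = i"
  shows "pull_time I i (pulls I i \<tau> \<omega>) \<omega> = \<tau>"
  unfolding pull_time_def
proof (rule Least_equality)
  show "1 \<le> \<tau> \<and> I \<tau> \<omega> = i \<and> pulls I i \<tau> \<omega> = pulls I i \<tau> \<omega>" using assms by simp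
next
  fix y assume y: "1 \<le> y \<and> I y \<omega> = i \<and> pulls I i y \<omega> = pulls I i \<tau> \<omega>"
  show "\<tau> \<le> y"
  proof (rule ccontr)
    assume "\<not> \<tau> \<le> y"
    then have "pulls I i y \<omega> < pulls I i \<tau> \<omega>" using assms by (intro pulls_strict) auto
    then show False using y by simp
  qed
qed

lemma pulls_inj: "inj_on (\<lambda>\<tau>. pulls I i \<tau> \<omega>) {\<tau> \<in> {1..t}. I \<tau> \<omega> = i}"
proof (rule inj_onI)
  fix x y assume x: "x \<in> {\<tau> \<in> {1..t}. I \<tau> \<omega> = i}" and y: "y \<in> {\<tau> \<in> {1..t}. I \<tau> \<omega> = i}"
    and e: "pulls I i x \<omega> = pulls I i y \<omega>"
  show "x = y"
  proof (rule linorder_cases[of x y])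
    assume "x < y" then show ?thesis using pulls_strict[of x y I \<omega> i] y e by simp
  next
    assume "y < x" then show ?thesis using pulls_strict[of y x I \<omega> i] x e by simp
  qed
qed

lemma pulls_image: "(\<lambda>\<tau>. pulls I i \<tau> \<omega>) ` {\<tau> \<in> {1..t}. I \<tau> \<omega> = i} = {1..pulls I i t \<omega>}"
proof (rule card_subset_eq)
  show "finite {1..pulls I i t \<omega>}" by simp
  show "(\<lambda>\<tau>. pulls I i \<tau> \<omega>) ` {\<tau> \<in> {1..t}. I \<tau> \<omega> = i} \<subseteq> {1..pulls I i t \<omega>}"
    using pulls_pos pulls_mono by fastforce
  show "card ((\<lambda>\<tau>. pulls I i \<tau> \<omega>) ` {\<tau> \<in> {1..t}. I \<tau> \<omega> = i}) = card {1..pulls I i t \<omega>}"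
  proof -
    have "card ((\<lambda>\<tau>. pulls I i \<tau> \<omega>) ` {\<tau> \<in> {1..t}. I \<tau> \<omega> = i}) = card {\<tau> \<in> {1..t}. I \<tau> \<omega> = i}"
      by (rule card_image[OF pulls_inj])
    also have "\<dots> = pulls I i t \<omega>" by (simp only: pulls_def)
    finally show ?thesis by simp
  qed
qed

lemma pull_time_props:
  assumes "1 \<le> k" "k \<le> pulls I i t \<omega>"
  shows "I (pull_time I i k \<omega>) \<omega> = i \<and> pulls I i (pull_time I i k \<omega>) \<omega> = k
     \<and> 1 \<le> pull_time I i k \<omega> \<and> pull_time I i k \<omega> \<le> t"
proof -
  have "k \<in> (\<lambda>\<tau>. pulls I i \<tau> \<omega>) ` {\<tau> \<in> {1..t}. I \<tau> \<omega> = i}"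
    using assms pulls_image[of I i \<omega> t] by simp
  then obtain \<tau> where "\<tau> \<in> {1..t}" "I \<tau> \<omega> = i" "k = pulls I i \<tau> \<omega>" by auto
  then show ?thesis using pull_time_eq[of \<tau> I \<omega> i] by auto
qed

lemma sum_pulls:
  "(\<Sum>\<tau>\<in>{1..t}. if I \<tau> \<omega> = i then f (pulls I i \<tau> \<omega>) \<tau> else 0)
   = (\<Sum>k\<in>{1..pulls I i t \<omega>}. f k (pull_time I i k \<omega>))"
proof -
  have "(\<Sum>\<tau>\<in>{1..t}. if I \<tau> \<omega> = i then f (pulls I i \<tau> \<omega>) \<tau> else 0)
      = (\<Sum>\<tau>\<in>{\<tau> \<in> {1..t}. I \<tau> \<omega> = i}. f (pulls I i \<tau> \<omega>) \<tau>)"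
    by (rule sum.inter_filter[symmetric]) simp
  also have "\<dots> = (\<Sum>k\<in>(\<lambda>\<tau>. pulls I i \<tau> \<omega>) ` {\<tau> \<in> {1..t}. I \<tau> \<omega> = i}. f k (pull_time I i k \<omega>))"
    by (rule sym, rule sum.reindex_cong[OF pulls_inj refl]) (auto simp: pull_time_eq)
  finally show ?thesis by (simp only: pulls_image)
qed

definition cfun :: "nat \<Rightarrow> (nat \<Rightarrow> nat) \<Rightarrow> nat \<Rightarrow> nat \<Rightarrow> real" where
  "cfun T h n k = (if k \<in> {n - h n + 1..n} then (1 + (real T - real k) / real (h n)) / real (h n)
     else if k \<in> {n + 1 - 2 * h n..n - h n} then - ((real T - real (k + h n)) / real (h n) ^ 2) else 0)"

lemma split_sum:
  fixes f g :: "nat \<Rightarrow> real"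
  assumes "1 \<le> h n" "2 * h n \<le> n"
  shows "(\<Sum>k\<in>{1..n}. if k \<in> {n - h n + 1..n} then f k else if k \<in> {n + 1 - 2 * h n..n - h n} then g k else 0)
     = sum f {n - h n + 1..n} + sum g {n + 1 - 2 * h n..n - h n}"
proof -
  let ?top = "{n - h n + 1..n}" and ?bot = "{n + 1 - 2 * h n..n - h n}"
  let ?F = "\<lambda>k. if k \<in> ?top then f k else if k \<in> ?bot then g k else 0"
  have sub: "?top \<union> ?bot \<subseteq> {1..n}" using assms by auto
  have "(\<Sum>k\<in>{1..n}. ?F k) = (\<Sum>k\<in>?top \<union> ?bot. ?F k)"
    by (rule sum.mono_neutral_right) (use sub in auto)
  also have "\<dots> = (\<Sum>k\<in>?top. ?F k) + (\<Sum>k\<in>?bot. ?F k)"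
    by (rule sum.union_disjoint) (use assms in auto)
  also have "(\<Sum>k\<in>?top. ?F k) = sum f ?top" by (rule sum.cong) auto
  also have "(\<Sum>k\<in>?bot. ?F k) = sum g ?bot" by (rule sum.cong) (use assms in auto)
  finally show ?thesis .
qed

lemma window_coef:
  assumes "1 \<le> h n" "2 * h n \<le> n"
  shows "window_est T h E n = (\<Sum>k\<in>{1..n}. cfun T h n k * E k)"
proof -
  let ?top = "{n - h n + 1..n}" and ?bot = "{n + 1 - 2 * h n..n - h n}"
  define hh where "hh = real (h n)"
  have hh: "hh > 0" using assms by (simp add: hh_def)
  have "window_est T h E n = (\<Sum>l\<in>?top. (1 + (real T - real l) / hh) / hh * E l)
        - (\<Sum>l\<in>?top. ((real T - real l) / hh ^ 2) * E (l - h n))"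
    unfolding window_est_def hh_def[symmetric] sum_distrib_left sum_subtractf[symmetric]
    by (rule sum.cong) (use hh in \<open>auto simp: field_simps power2_eq_square\<close>)
  also have "(\<Sum>l\<in>?top. ((real T - real l) / hh ^ 2) * E (l - h n))
      = (\<Sum>k\<in>?bot. ((real T - real (k + h n)) / hh ^ 2) * E k)"
  proof (rule sum.reindex_cong[of "\<lambda>k. k + h n"])
    show "inj_on (\<lambda>k. k + h n) ?bot" by (auto simp: inj_on_def)
    show "?top = (\<lambda>k. k + h n) ` ?bot"
      unfolding image_add_atLeastAtMost using assms by auto
  qed auto
  also have "(\<Sum>l\<in>?top. (1 + (real T - real l) / hh) / hh * E l) - (\<Sum>k\<in>?bot. ((real T - real (k + h n)) / hh ^ 2) * E k)
     = (\<Sum>l\<in>?top. (1 + (real T - real l) / hh) / hh * E l) + (\<Sum>k\<in>?bot. (- ((real T - real (k + h n)) / hh ^ 2)) * E k)"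
    by (simp add: sum_negf)
  also have "\<dots> = (\<Sum>k\<in>{1..n}. cfun T h n k * E k)"
    unfolding cfun_def hh_def
    by (subst split_sum[of h n, OF assms, symmetric]) (rule sum.cong, auto)
  finally show ?thesis .
qed

lemma cfun_zero: "n < k \<Longrightarrow> cfun T h n k = 0"
  by (auto simp: cfun_def)

lemma cfun_sq:
  assumes "1 \<le> h n" "2 * h n \<le> n" "n < T"
  shows "(\<Sum>k\<in>{1..n}. (cfun T h n k)\<^sup>2) \<le> 5 * (real T - real n + real (h n) - 1)\<^sup>2 / real (h n) ^ 3"
proof -
  let ?top = "{n - h n + 1..n}" and ?bot = "{n + 1 - 2 * h n..n - h n}"
  define hh where "hh = real (h n)"
  define D where "D = real T - real n + real (h n) - 1"
  have hh: "hh \<ge> 1" using assms by (simp add: hh_def)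
  have hD: "hh \<le> D" using assms by (simp add: hh_def D_def)
  have "(\<Sum>k\<in>{1..n}. (cfun T h n k)\<^sup>2) \<le> (\<Sum>k\<in>{1..n}. if k \<in> ?top then 4 * D\<^sup>2 / hh ^ 4 else if k \<in> ?bot then D\<^sup>2 / hh ^ 4 else 0)"
  proof (rule sum_mono)
    fix k assume k: "k \<in> {1..n}"
    show "(cfun T h n k)\<^sup>2 \<le> (if k \<in> ?top then 4 * D\<^sup>2 / hh ^ 4 else if k \<in> ?bot then D\<^sup>2 / hh ^ 4 else 0)"
    proof (cases "k \<in> ?top")
      case True
      have e: "cfun T h n k = (hh + (real T - real k)) / hh^2"
        using True hh unfolding cfun_def hh_def[symmetric] by (simp add: field_simps power2_eq_square)
      have a: "0 \<le> real T - real k" "real T - real k \<le> D"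
        using True assms by (auto simp: D_def)
      have "0 \<le> hh + (real T - real k)" "hh + (real T - real k) \<le> 2 * D" using a hD hh by auto
      then have "(hh + (real T - real k))\<^sup>2 \<le> (2 * D)\<^sup>2" by (intro power_mono) auto
      then have "(cfun T h n k)\<^sup>2 \<le> (2 * D)\<^sup>2 / hh ^ 4" unfolding e using hh
        by (simp add: power_divide divide_right_mono flip: power_mult)
      then show ?thesis using True by (simp add: power_mult_distrib)
    next
      case nt: False
      show ?thesis
      proof (cases "k \<in> ?bot")
        case True
        have e: "cfun T h n k = - ((real T - real (k + h n)) / hh^2)"
          using True nt hh unfolding cfun_def hh_def[symmetric] by simp
        have a: "0 \<le> real T - real (k + h n)" "real T - real (k + h n) \<le> D"
          using True assms by (auto simp: D_def)
        then have "(real T - real (k + h n))\<^sup>2 \<le> D\<^sup>2" by (intro power_mono) auto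
        then have "(cfun T h n k)\<^sup>2 \<le> D\<^sup>2 / hh ^ 4" unfolding e using hh
          by (simp add: power_divide divide_right_mono flip: power_mult)
        then show ?thesis using True nt by simp
      next
        case False
        have "cfun T h n k = 0" by (simp only: cfun_def if_not_P[OF nt] if_not_P[OF False])
        then show ?thesis using nt False by (simp only: if_not_P[OF nt] if_not_P[OF False]) simp
      qed
    qed
  qed
  also have "\<dots> = (\<Sum>k\<in>?top. 4 * D\<^sup>2 / hh ^ 4) + (\<Sum>k\<in>?bot. D\<^sup>2 / hh ^ 4)"
    by (rule split_sum[of h n, OF assms(1,2)])
  also have "\<dots> = hh * (4 * D\<^sup>2 / hh ^ 4) + hh * (D\<^sup>2 / hh ^ 4)"
    using assms by (simp add: hh_def)
  also have "\<dots> = 5 * D\<^sup>2 / hh ^ 3" using hh by (simp add: field_simps power_def)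
  finally show ?thesis by (simp add: D_def hh_def)
qed

locale bsetup =
  fixes M :: "'w measure" and F :: "nat \<Rightarrow> 'w measure"
    and I :: "nat \<Rightarrow> 'w \<Rightarrow> nat" and eta :: "nat \<Rightarrow> 'w \<Rightarrow> real"
    and i :: nat and \<sigma> :: real
  assumes prob: "prob_space M"
    and filt_sub: "\<And>t. sigma_finite_subalgebra M (F t)"
    and filt_mono: "\<And>t. subalgebra (F (Suc t)) (F t)"
    and I_pred: "\<And>t. 1 \<le> t \<Longrightarrow> I t \<in> measurable (F (t - 1)) (count_space UNIV)"
    and eta_adapt: "\<And>t. 1 \<le> t \<Longrightarrow> eta t \<in> borel_measurable (F t)"
    and eta_subgauss: "\<And>t \<xi>. 1 \<le> t \<Longrightarrow>
          AE \<omega> in M. nn_cond_exp M (F (t - 1)) (\<lambda>\<omega>. ennreal (exp (\<xi> * eta t \<omega>))) \<omega>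
                       \<le> ennreal (exp (\<sigma>\<^sup>2 * \<xi>\<^sup>2 / 2))"
begin

lemma subF: "subalgebra M (F t)"
  using filt_sub sigma_finite_subalgebra.subalg by blast

lemma spaceF[simp]: "space (F t) = space M"
  using subF unfolding subalgebra_def by blast

lemma subFF: "s \<le> t \<Longrightarrow> subalgebra (F t) (F s)"
proof (induction t rule: dec_induct)
  case base then show ?case by (simp add: subalgebra_def)
next
  case (step t) then show ?case using filt_mono[of t] unfolding subalgebra_def by auto
qed

lemma I_meas: "1 \<le> \<tau> \<Longrightarrow> \<tau> \<le> Suc t \<Longrightarrow> I \<tau> \<in> measurable (F t) (count_space UNIV)"
  by (rule measurable_from_subalg[OF subFF I_pred]) auto

lemma eta_meas: "1 \<le> \<tau> \<Longrightarrow> \<tau> \<le> t \<Longrightarrow> eta \<tau> \<in> borel_measurable (F t)"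
  by (rule measurable_from_subalg[OF subFF eta_adapt]) auto

lemma I_set: "1 \<le> \<tau> \<Longrightarrow> \<tau> \<le> Suc t \<Longrightarrow> {\<omega> \<in> space (F t). I \<tau> \<omega> = i} \<in> sets (F t)"
proof -
  assume a: "1 \<le> \<tau>" "\<tau> \<le> Suc t"
  have "I \<tau> -` {i} \<inter> space (F t) \<in> sets (F t)"
    by (rule measurable_sets[OF I_meas[OF a]]) simp
  moreover have "{\<omega> \<in> space (F t). I \<tau> \<omega> = i} = I \<tau> -` {i} \<inter> space (F t)" by auto
  ultimately show ?thesis by simp
qed

lemma pulls_meas: "\<tau> \<le> Suc t \<Longrightarrow> (\<lambda>\<omega>. pulls I i \<tau> \<omega>) \<in> measurable (F t) (count_space UNIV)"
proof (induction \<tau>)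
  case 0 then show ?case by simp
next
  case (Suc \<tau>)
  have e: "(\<lambda>\<omega>. pulls I i (Suc \<tau>) \<omega>) = (\<lambda>\<omega>. if I (Suc \<tau>) \<omega> = i then Suc (pulls I i \<tau> \<omega>) else pulls I i \<tau> \<omega>)"
    by (auto simp: pulls_Suc)
  have m: "(\<lambda>\<omega>. pulls I i \<tau> \<omega>) \<in> measurable (F t) (count_space UNIV)" using Suc by simp
  show ?case unfolding e
    by (rule measurable_If[OF measurable_compose[OF m] m I_set]) (use Suc in auto)
qed

definition xi :: "(nat \<Rightarrow> real) \<Rightarrow> nat \<Rightarrow> 'w \<Rightarrow> real" where
  "xi c \<tau> \<omega> = (if I \<tau> \<omega> = i then c (pulls I i \<tau> \<omega>) else 0)"

definition DD :: "(nat \<Rightarrow> real) \<Rightarrow> nat \<Rightarrow> 'w \<Rightarrow> real" where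
  "DD c t \<omega> = (\<Sum>\<tau>\<in>{1..t}. xi c \<tau> \<omega> * eta \<tau> \<omega>)"

definition VV :: "(nat \<Rightarrow> real) \<Rightarrow> nat \<Rightarrow> 'w \<Rightarrow> real" where
  "VV c t \<omega> = (\<Sum>\<tau>\<in>{1..t}. (xi c \<tau> \<omega>)\<^sup>2)"

definition GG :: "(nat \<Rightarrow> real) \<Rightarrow> real \<Rightarrow> nat \<Rightarrow> 'w \<Rightarrow> ennreal" where
  "GG c l t \<omega> = ennreal (exp (l * DD c t \<omega> - l\<^sup>2 * \<sigma>\<^sup>2 / 2 * VV c t \<omega>))"

lemma xi_meas: "1 \<le> \<tau> \<Longrightarrow> \<tau> \<le> Suc t \<Longrightarrow> xi c \<tau> \<in> borel_measurable (F t)"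
  unfolding xi_def
  by (rule measurable_If[OF measurable_compose[OF pulls_meas] _ I_set]) auto

lemma DD_meas: "DD c t \<in> borel_measurable (F t)"
  unfolding DD_def
  by (intro borel_measurable_sum borel_measurable_times xi_meas eta_meas) auto

lemma VV_meas: "VV c t \<in> borel_measurable (F t)"
  unfolding VV_def
  by (intro borel_measurable_sum borel_measurable_power xi_meas) auto

lemma GG_meas: "GG c l t \<in> borel_measurable (F t)"
proof -
  note [measurable] = DD_meas VV_meas
  show ?thesis unfolding GG_def by measurable
qed

lemma toM: "f \<in> borel_measurable (F t) \<Longrightarrow> f \<in> borel_measurable M"
  by (rule measurable_from_subalg[OF subF])

end

context bsetup begin

lemma KL:
  assumes s: "1 \<le> s" and Y: "Y \<in> borel_measurable (F (s - 1))"
    and Z: "\<zeta> \<in> borel_measurable (F (s - 1))" and fin: "finite (\<zeta> ` space M)"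
  shows "(\<integral>\<^sup>+\<omega>. Y \<omega> * ennreal (exp (\<zeta> \<omega> * eta s \<omega>)) \<partial>M)
       \<le> (\<integral>\<^sup>+\<omega>. Y \<omega> * ennreal (exp (\<sigma>\<^sup>2 * (\<zeta> \<omega>)\<^sup>2 / 2)) \<partial>M)"
proof -
  interpret S: sigma_finite_subalgebra M "F (s - 1)" by (rule filt_sub)
  let ?R = "\<zeta> ` space M"
  define Yv where "Yv v \<omega> = (if \<zeta> \<omega> = v then Y \<omega> else 0)" for v \<omega>
  have Yv_meas: "Yv v \<in> borel_measurable (F (s - 1))" for v
  proof -
    note [measurable] = Y Z
    show ?thesis unfolding Yv_def by measurable
  qed
  have Yv_M: "Yv v \<in> borel_measurable M" for v by (rule toM[OF Yv_meas])
  have eM: "eta s \<in> borel_measurable M" by (rule toM[OF eta_adapt[OF s]])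
  have pt: "Y \<omega> * ennreal (exp (g (\<zeta> \<omega>))) = (\<Sum>v\<in>?R. Yv v \<omega> * ennreal (exp (g v)))"
    if "\<omega> \<in> space M" for \<omega> g
  proof -
    have "(\<Sum>v\<in>?R. Yv v \<omega> * ennreal (exp (g v))) = (\<Sum>v\<in>?R. if \<zeta> \<omega> = v then Y \<omega> * ennreal (exp (g v)) else 0)"
      unfolding Yv_def by (rule sum.cong) auto
    also have "\<dots> = Y \<omega> * ennreal (exp (g (\<zeta> \<omega>)))"
      using fin that by (subst sum.delta') auto
    finally show ?thesis by simp
  qed
  have "(\<integral>\<^sup>+\<omega>. Y \<omega> * ennreal (exp (\<zeta> \<omega> * eta s \<omega>)) \<partial>M)
      = (\<integral>\<^sup>+\<omega>. (\<Sum>v\<in>?R. Yv v \<omega> * ennreal (exp (v * eta s \<omega>))) \<partial>M)"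
    by (rule nn_integral_cong) (rule pt[where g = "\<lambda>v. v * eta s _"])
  also have "\<dots> = (\<Sum>v\<in>?R. \<integral>\<^sup>+\<omega>. Yv v \<omega> * ennreal (exp (v * eta s \<omega>)) \<partial>M)"
    by (rule nn_integral_sum) (use Yv_M eM in measurable)
  also have "\<dots> \<le> (\<Sum>v\<in>?R. \<integral>\<^sup>+\<omega>. Yv v \<omega> * ennreal (exp (\<sigma>\<^sup>2 * v\<^sup>2 / 2)) \<partial>M)"
  proof (rule sum_mono)
    fix v
    have gm: "(\<lambda>\<omega>. ennreal (exp (v * eta s \<omega>))) \<in> borel_measurable M" using eM by measurable
    have "(\<integral>\<^sup>+\<omega>. Yv v \<omega> * ennreal (exp (v * eta s \<omega>)) \<partial>M)
        = (\<integral>\<^sup>+\<omega>. Yv v \<omega> * nn_cond_exp M (F (s - 1)) (\<lambda>\<omega>. ennreal (exp (v * eta s \<omega>))) \<omega> \<partial>M)"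
      by (rule S.nn_cond_exp_intg[symmetric, OF Yv_meas gm])
    also have "\<dots> \<le> (\<integral>\<^sup>+\<omega>. Yv v \<omega> * ennreal (exp (\<sigma>\<^sup>2 * v\<^sup>2 / 2)) \<partial>M)"
    proof (rule nn_integral_mono_AE)
      show "AE \<omega> in M. Yv v \<omega> * nn_cond_exp M (F (s - 1)) (\<lambda>\<omega>. ennreal (exp (v * eta s \<omega>))) \<omega>
              \<le> Yv v \<omega> * ennreal (exp (\<sigma>\<^sup>2 * v\<^sup>2 / 2))"
        using eta_subgauss[OF s, of v] by eventually_elim (rule mult_left_mono, auto)
    qed
    finally show "(\<integral>\<^sup>+\<omega>. Yv v \<omega> * ennreal (exp (v * eta s \<omega>)) \<partial>M)
        \<le> (\<integral>\<^sup>+\<omega>. Yv v \<omega> * ennreal (exp (\<sigma>\<^sup>2 * v\<^sup>2 / 2)) \<partial>M)" .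
  qed
  also have "\<dots> = (\<integral>\<^sup>+\<omega>. (\<Sum>v\<in>?R. Yv v \<omega> * ennreal (exp (\<sigma>\<^sup>2 * v\<^sup>2 / 2))) \<partial>M)"
    by (rule nn_integral_sum[symmetric]) (use Yv_M in measurable)
  also have "\<dots> = (\<integral>\<^sup>+\<omega>. Y \<omega> * ennreal (exp (\<sigma>\<^sup>2 * (\<zeta> \<omega>)\<^sup>2 / 2)) \<partial>M)"
    by (rule nn_integral_cong) (rule pt[where g = "\<lambda>v. \<sigma>\<^sup>2 * v\<^sup>2 / 2", symmetric])
  finally show ?thesis .
qed

lemma GG_0: "GG c l 0 \<omega> = 1"
  by (simp add: GG_def DD_def VV_def)

lemma GI: "(\<integral>\<^sup>+\<omega>. GG c l t \<omega> \<partial>M) \<le> 1"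
proof (induction t)
  case 0
  interpret prob_space M by (rule prob)
  show ?case by (simp add: GG_0 emeasure_space_1)
next
  case (Suc t)
  define \<zeta> where "\<zeta> \<omega> = l * xi c (Suc t) \<omega>" for \<omega>
  define Y where "Y \<omega> = GG c l t \<omega> * ennreal (exp (- (\<sigma>\<^sup>2 * (\<zeta> \<omega>)\<^sup>2 / 2)))" for \<omega>
  have Zm: "\<zeta> \<in> borel_measurable (F (Suc t - 1))"
    unfolding \<zeta>_def by (intro borel_measurable_times borel_measurable_const xi_meas) auto
  have Ym: "Y \<in> borel_measurable (F (Suc t - 1))"
  proof -
    note [measurable] = GG_meas Zm[simplified]
    show ?thesis unfolding Y_def by simp measurable
  qed
  have fin: "finite (\<zeta> ` space M)"
  proof (rule finite_subset)
    show "\<zeta> ` space M \<subseteq> insert 0 ((\<lambda>k. l * c k) ` {..Suc t})"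
    proof
      fix x assume "x \<in> \<zeta> ` space M"
      then obtain \<omega> where x: "x = \<zeta> \<omega>" by auto
      show "x \<in> insert 0 ((\<lambda>k. l * c k) ` {..Suc t})"
      proof (cases "I (Suc t) \<omega> = i")
        case True
        then have "x = l * c (pulls I i (Suc t) \<omega>)" by (simp add: x \<zeta>_def xi_def)
        moreover have "pulls I i (Suc t) \<omega> \<in> {..Suc t}" using pulls_le by simp
        ultimately show ?thesis by blast
      qed (simp add: x \<zeta>_def xi_def)
    qed
  qed simp
  have e1: "GG c l (Suc t) \<omega> = Y \<omega> * ennreal (exp (\<zeta> \<omega> * eta (Suc t) \<omega>))" for \<omega>
  proof -
    have "GG c l (Suc t) \<omega> = ennreal (exp (l * DD c t \<omega> - l\<^sup>2 * \<sigma>\<^sup>2 / 2 * VV c t \<omega>) * exp (- (\<sigma>\<^sup>2 * (\<zeta> \<omega>)\<^sup>2 / 2)) * exp (\<zeta> \<omega> * eta (Suc t) \<omega>))"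
      unfolding GG_def DD_def VV_def \<zeta>_def
      by (simp add: mult_exp_exp algebra_simps power_mult_distrib)
    then show ?thesis unfolding Y_def GG_def by (simp add: ennreal_mult)
  qed
  have e2: "Y \<omega> * ennreal (exp (\<sigma>\<^sup>2 * (\<zeta> \<omega>)\<^sup>2 / 2)) = GG c l t \<omega>" for \<omega>
    unfolding Y_def by (simp add: ennreal_mult[symmetric] mult.assoc mult_exp_exp del: ennreal_mult) 
  have "(\<integral>\<^sup>+\<omega>. GG c l (Suc t) \<omega> \<partial>M) = (\<integral>\<^sup>+\<omega>. Y \<omega> * ennreal (exp (\<zeta> \<omega> * eta (Suc t) \<omega>)) \<partial>M)"
    by (simp add: e1)
  also have "\<dots> \<le> (\<integral>\<^sup>+\<omega>. Y \<omega> * ennreal (exp (\<sigma>\<^sup>2 * (\<zeta> \<omega>)\<^sup>2 / 2)) \<partial>M)"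
    by (rule KL[OF _ Ym Zm fin]) simp
  also have "\<dots> = (\<integral>\<^sup>+\<omega>. GG c l t \<omega> \<partial>M)" by (simp add: e2)
  finally show ?case using Suc by simp
qed

end

context bsetup begin

lemma VV_eq: "VV c t \<omega> = (\<Sum>k\<in>{1..pulls I i t \<omega>}. (c k)\<^sup>2)"
proof -
  have "VV c t \<omega> = (\<Sum>\<tau>\<in>{1..t}. if I \<tau> \<omega> = i then (\<lambda>k \<tau>. (c k)\<^sup>2) (pulls I i \<tau> \<omega>) \<tau> else 0)"
    unfolding VV_def xi_def by (rule sum.cong) auto
  also have "\<dots> = (\<Sum>k\<in>{1..pulls I i t \<omega>}. (c k)\<^sup>2)" by (rule sum_pulls)
  finally show ?thesis .
qed

lemma DD_eq: "DD c t \<omega> = (\<Sum>k\<in>{1..pulls I i t \<omega>}. c k * eta (pull_time I i k \<omega>) \<omega>)"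
proof -
  have "DD c t \<omega> = (\<Sum>\<tau>\<in>{1..t}. if I \<tau> \<omega> = i then (\<lambda>k \<tau>. c k * eta \<tau> \<omega>) (pulls I i \<tau> \<omega>) \<tau> else 0)"
    unfolding DD_def xi_def by (rule sum.cong) auto
  also have "\<dots> = (\<Sum>k\<in>{1..pulls I i t \<omega>}. c k * eta (pull_time I i k \<omega>) \<omega>)" by (rule sum_pulls)
  finally show ?thesis .
qed

lemma VV_le:
  assumes "\<And>k. n < k \<Longrightarrow> c k = 0"
  shows "VV c t \<omega> \<le> (\<Sum>k\<in>{1..n}. (c k)\<^sup>2)"
proof -
  let ?N = "pulls I i t \<omega>"
  have "VV c t \<omega> = (\<Sum>k\<in>{1..?N} \<inter> {1..n}. (c k)\<^sup>2)"
    unfolding VV_eq by (rule sum.mono_neutral_right) (use assms in auto)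
  also have "\<dots> \<le> (\<Sum>k\<in>{1..n}. (c k)\<^sup>2)" by (rule sum_mono2) auto
  finally show ?thesis .
qed

lemma DD_measM: "DD c t \<in> borel_measurable M" by (rule toM[OF DD_meas])

lemma tail:
  assumes l: "0 \<le> l" and V: "\<And>\<omega>. \<omega> \<in> space M \<Longrightarrow> VV c t \<omega> \<le> C"
  shows "emeasure M {\<omega>\<in>space M. \<beta> < DD c t \<omega>} \<le> ennreal (exp (- (l * \<beta>) + l\<^sup>2 * \<sigma>\<^sup>2 / 2 * C))"
proof -
  let ?S = "{\<omega>\<in>space M. \<beta> < DD c t \<omega>}"
  let ?K = "ennreal (exp (- (l * \<beta>) + l\<^sup>2 * \<sigma>\<^sup>2 / 2 * C))"
  note [measurable] = DD_measM
  have S: "?S \<in> sets M" by measurable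
  have "emeasure M ?S = (\<integral>\<^sup>+\<omega>. indicator ?S \<omega> \<partial>M)" using S by simp
  also have "\<dots> \<le> (\<integral>\<^sup>+\<omega>. GG c l t \<omega> * ?K \<partial>M)"
  proof (rule nn_integral_mono)
    fix \<omega> assume \<omega>: "\<omega> \<in> space M"
    show "indicator ?S \<omega> \<le> GG c l t \<omega> * ?K"
    proof (cases "\<omega> \<in> ?S")
      case True
      have "0 \<le> l * (DD c t \<omega> - \<beta>)" using True l by simp
      moreover have "0 \<le> l\<^sup>2 * \<sigma>\<^sup>2 / 2 * (C - VV c t \<omega>)" using V[OF \<omega>] by simp
      ultimately have "0 \<le> (l * DD c t \<omega> - l\<^sup>2 * \<sigma>\<^sup>2 / 2 * VV c t \<omega>) + (- (l * \<beta>) + l\<^sup>2 * \<sigma>\<^sup>2 / 2 * C)"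
        by (simp add: algebra_simps)
      then have "1 \<le> exp (l * DD c t \<omega> - l\<^sup>2 * \<sigma>\<^sup>2 / 2 * VV c t \<omega>) * exp (- (l * \<beta>) + l\<^sup>2 * \<sigma>\<^sup>2 / 2 * C)"
        by (simp add: mult_exp_exp)
      then have "ennreal 1 \<le> GG c l t \<omega> * ?K"
        unfolding GG_def by (simp add: ennreal_mult[symmetric] del: ennreal_1)
      then show ?thesis using True by simp
    qed simp
  qed
  also have "\<dots> = (\<integral>\<^sup>+\<omega>. GG c l t \<omega> \<partial>M) * ?K"
    by (rule nn_integral_multc) (rule toM[OF GG_meas])
  also have "\<dots> \<le> 1 * ?K" by (rule mult_right_mono[OF GI]) simp
  finally show ?thesis by simp
qed

lemma DD_neg: "DD (\<lambda>k. - c k) t \<omega> = - DD c t \<omega>"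
  unfolding DD_def xi_def sum_negf[symmetric] by (rule sum.cong) auto

lemma VV_neg: "VV (\<lambda>k. - c k) t \<omega> = VV c t \<omega>"
  unfolding VV_def xi_def by (rule sum.cong) auto

end

context bsetup begin

lemma tail_pos:
  assumes \<sigma>: "0 < \<sigma>" and Cp: "0 < C" and V: "\<And>\<omega>. \<omega> \<in> space M \<Longrightarrow> VV c t \<omega> \<le> C" and \<beta>: "0 \<le> \<beta>"
  shows "emeasure M {\<omega>\<in>space M. \<beta> < DD c t \<omega>} \<le> ennreal (exp (- (\<beta>\<^sup>2 / (2 * \<sigma>\<^sup>2 * C))))"
proof -
  define l where "l = \<beta> / (\<sigma>\<^sup>2 * C)"
  have l: "0 \<le> l" using \<sigma> Cp \<beta> by (simp add: l_def)
  have "- (l * \<beta>) + l\<^sup>2 * \<sigma>\<^sup>2 / 2 * C = - (\<beta>\<^sup>2 / (2 * \<sigma>\<^sup>2 * C))"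
    using \<sigma> Cp unfolding l_def by (simp add: field_simps power2_eq_square)
  then show ?thesis using tail[OF l V, of \<beta>] by simp
qed

lemma tail_zero:
  assumes \<sigma>: "\<sigma> = 0" and V: "\<And>\<omega>. \<omega> \<in> space M \<Longrightarrow> VV c t \<omega> \<le> C"
  shows "emeasure M {\<omega>\<in>space M. 0 < DD c t \<omega>} = 0"
proof -
  note [measurable] = DD_measM
  define S where "S m = {\<omega>\<in>space M. inverse (real (Suc m)) < DD c t \<omega>}" for m
  have Sm: "S m \<in> sets M" for m unfolding S_def by measurable
  have S0: "emeasure M (S m) = 0" for m
  proof -
    have eps: "emeasure M (S m) \<le> 0 + ennreal e" if e: "0 < e" for e
    proof -
      define l where "l = real (Suc m) * max 0 (- ln e)"
      have l: "0 \<le> l" by (simp add: l_def)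
      have "emeasure M (S m) \<le> ennreal (exp (- (l * inverse (real (Suc m))) + l\<^sup>2 * \<sigma>\<^sup>2 / 2 * C))"
        unfolding S_def by (rule tail[OF l V])
      moreover have "l * inverse (real (Suc m)) = max 0 (- ln e)" unfolding l_def by simp
      moreover have "exp (- max 0 (- ln e)) \<le> e"
      proof -
        have "exp (- max 0 (- ln e)) \<le> exp (ln e)" by simp
        then show ?thesis using e by simp
      qed
      ultimately show ?thesis using \<sigma> by (simp add: ennreal_leI order_trans)
    qed
    have "emeasure M (S m) \<le> 0" by (rule ennreal_le_epsilon, rule eps)
    then show ?thesis by simp
  qed
  have "{\<omega>\<in>space M. 0 < DD c t \<omega>} = (\<Union>m. S m)"
  proof
    show "{\<omega>\<in>space M. 0 < DD c t \<omega>} \<subseteq> (\<Union>m. S m)"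
    proof
      fix \<omega> assume "\<omega> \<in> {\<omega>\<in>space M. 0 < DD c t \<omega>}"
      then have "\<omega> \<in> space M" "0 < DD c t \<omega>" by auto
      then obtain m where "\<omega> \<in> space M" "inverse (real (Suc m)) < DD c t \<omega>"
        using reals_Archimedean by blast
      then show "\<omega> \<in> (\<Union>m. S m)" by (auto simp: S_def)
    qed
    show "(\<Union>m. S m) \<subseteq> {\<omega>\<in>space M. 0 < DD c t \<omega>}"
    proof
      fix \<omega> assume "\<omega> \<in> (\<Union>m. S m)"
      then obtain m where m: "\<omega> \<in> space M" "inverse (real (Suc m)) < DD c t \<omega>" by (auto simp: S_def)
      have "0 < inverse (real (Suc m))" by simp
      then have "0 < DD c t \<omega>" using m(2) by linarith
      then show "\<omega> \<in> {\<omega>\<in>space M. 0 < DD c t \<omega>}" using m(1) by simp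
    qed
  qed
  then show ?thesis using emeasure_UN_eq_0[of M S] S0 Sm by auto
qed

end

lemma Zeq:
  assumes h1: "1 \<le> h n" and h2: "2 * h n \<le> n" and nN: "n \<le> pulls I i t' \<omega>"
  shows "check_mu mu I eta i T h n \<omega> - tilde_mu mu i T h n
     = (\<Sum>k\<in>{1..pulls I i t' \<omega>}. cfun T h n k * eta (pull_time I i k \<omega>) \<omega>)"
proof -
  have "check_mu mu I eta i T h n \<omega> - tilde_mu mu i T h n
      = (\<Sum>k\<in>{1..n}. cfun T h n k * Xobs mu I eta i k \<omega>) - (\<Sum>k\<in>{1..n}. cfun T h n k * mu i k)"
    unfolding check_mu_def tilde_mu_def window_coef[of h n, OF h1 h2] ..
  also have "\<dots> = (\<Sum>k\<in>{1..n}. cfun T h n k * (Xobs mu I eta i k \<omega> - mu i k))"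
    by (simp add: sum_subtractf right_diff_distrib)
  also have "\<dots> = (\<Sum>k\<in>{1..n}. cfun T h n k * eta (pull_time I i k \<omega>) \<omega>)"
  proof (rule sum.cong[OF refl])
    fix k assume k: "k \<in> {1..n}"
    then have "1 \<le> k" "k \<le> pulls I i t' \<omega>" using nN by auto
    from pull_time_props[OF this] have "Xobs mu I eta i k \<omega> = mu i k + eta (pull_time I i k \<omega>) \<omega>"
      unfolding Xobs_def reward_def by simp
    then show "cfun T h n k * (Xobs mu I eta i k \<omega> - mu i k) = cfun T h n k * eta (pull_time I i k \<omega>) \<omega>"
      by simp
  qed
  also have "\<dots> = (\<Sum>k\<in>{1..pulls I i t' \<omega>}. cfun T h n k * eta (pull_time I i k \<omega>) \<omega>)"
    by (rule sum.mono_neutral_left) (use nN cfun_zero in auto)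
  finally show ?thesis .
qed

context bsetup begin

lemma tail_final:
  assumes V: "\<And>\<omega>. \<omega> \<in> space M \<Longrightarrow> VV c t \<omega> \<le> C" and C: "0 < C" and \<beta>: "0 \<le> \<beta>"
    and sig: "0 \<le> \<sigma>" and eq: "\<beta>\<^sup>2 = 2 * \<sigma>\<^sup>2 * C * r"
  shows "measure M {\<omega>\<in>space M. \<beta> < DD c t \<omega>} \<le> exp (- r)"
proof -
  interpret P: prob_space M by (rule prob)
  show ?thesis
  proof (cases "\<sigma> = 0")
    case True
    then have "\<beta> = 0" using eq by simp
    then have "emeasure M {\<omega>\<in>space M. \<beta> < DD c t \<omega>} = 0" using tail_zero[OF True V] by simp
    then have "measure M {\<omega>\<in>space M. \<beta> < DD c t \<omega>} = 0" by (simp add: P.emeasure_eq_measure)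
    then show ?thesis by simp
  next
    case False
    then have s: "0 < \<sigma>" using sig by simp
    have r: "\<beta>\<^sup>2 / (2 * \<sigma>\<^sup>2 * C) = r" using eq s C by (simp add: field_simps)
    have "ennreal (measure M {\<omega>\<in>space M. \<beta> < DD c t \<omega>}) \<le> ennreal (exp (- r))"
      using tail_pos[OF s C V \<beta>] r by (simp add: P.emeasure_eq_measure)
    then show ?thesis by (simp add: ennreal_le_iff)
  qed
qed

end

theorem lemma6:
  fixes M :: "'w measure" and F :: "nat \<Rightarrow> 'w measure"
    and I :: "nat \<Rightarrow> 'w \<Rightarrow> nat" and eta :: "nat \<Rightarrow> 'w \<Rightarrow> real"
    and mu :: "nat \<Rightarrow> nat \<Rightarrow> real" and K i T :: nat and h :: "nat \<Rightarrow> nat"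
    and \<sigma> a :: real
  assumes prob: "prob_space M"
    and filt_sub: "\<And>t. sigma_finite_subalgebra M (F t)"
    and filt_mono: "\<And>t. subalgebra (F (Suc t)) (F t)"
    and arms: "\<And>t \<omega>. 1 \<le> t \<Longrightarrow> \<omega> \<in> space M \<Longrightarrow> I t \<omega> < K"
    and I_pred: "\<And>t. 1 \<le> t \<Longrightarrow> I t \<in> measurable (F (t - 1)) (count_space UNIV)"
    and eta_adapt: "\<And>t. 1 \<le> t \<Longrightarrow> eta t \<in> borel_measurable (F t)"
    and eta_int: "\<And>t. 1 \<le> t \<Longrightarrow> integrable M (eta t)"
    and eta_zero_mean: "\<And>t. 1 \<le> t \<Longrightarrow>
          AE \<omega> in M. real_cond_exp M (F (t - 1)) (eta t) \<omega> = 0"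
    and eta_subgauss: "\<And>t \<xi>. 1 \<le> t \<Longrightarrow>
          AE \<omega> in M. nn_cond_exp M (F (t - 1)) (\<lambda>\<omega>. ennreal (exp (\<xi> * eta t \<omega>))) \<omega>
                       \<le> ennreal (exp (\<sigma>\<^sup>2 * \<xi>\<^sup>2 / 2))"
    and sigma_nonneg: "0 \<le> \<sigma>"
    and arm: "i < K"
    and h_le: "\<And>n. h n \<le> n div 2"
    and a_pos: "0 < a"
  shows "measure M {\<omega> \<in> space M. \<exists>t \<in> {1..T}.
            1 \<le> h (pulls I i (t - 1) \<omega>) \<and>
            \<bar>check_mu mu I eta i T h (pulls I i (t - 1) \<omega>) \<omega>
               - tilde_mu mu i T h (pulls I i (t - 1) \<omega>)\<bar>
              > check_beta \<sigma> a T h (pulls I i (t - 1) \<omega>)}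
         \<le> 2 * real T * exp (- a / 10)"
proof -
  interpret bsetup M F I eta i \<sigma>
    by (rule bsetup.intro[OF prob filt_sub filt_mono I_pred eta_adapt eta_subgauss])
  interpret P: prob_space M by (rule prob)
  let ?S = "{\<omega> \<in> space M. \<exists>t \<in> {1..T}.
            1 \<le> h (pulls I i (t - 1) \<omega>) \<and>
            \<bar>check_mu mu I eta i T h (pulls I i (t - 1) \<omega>) \<omega>
               - tilde_mu mu i T h (pulls I i (t - 1) \<omega>)\<bar>
              > check_beta \<sigma> a T h (pulls I i (t - 1) \<omega>)}"
  define NN where "NN = {n. n < T \<and> 1 \<le> h n}"
  define E where "E n = {\<omega>\<in>space M. check_beta \<sigma> a T h n < DD (cfun T h n) (T - 1) \<omega>}
      \<union> {\<omega>\<in>space M. check_beta \<sigma> a T h n < DD (\<lambda>k. - cfun T h n k) (T - 1) \<omega>}" for n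
  have finN: "finite NN" unfolding NN_def by simp
  have cardN: "card NN \<le> T" unfolding NN_def
    using card_mono[of "{..<T}" "{n. n < T \<and> 1 \<le> h n}"] by auto
  have h2: "2 * h n \<le> n" for n using h_le[of n] by simp
  have Em: "E n \<in> sets M" for n
  proof -
    note [measurable] = DD_measM
    show ?thesis unfolding E_def by measurable
  qed
  have sub: "?S \<subseteq> (\<Union>n\<in>NN. E n)"
  proof
    fix \<omega> assume "\<omega> \<in> ?S"
    then obtain t where \<omega>: "\<omega> \<in> space M" and t: "t \<in> {1..T}"
      and h1: "1 \<le> h (pulls I i (t - 1) \<omega>)"
      and gt: "\<bar>check_mu mu I eta i T h (pulls I i (t - 1) \<omega>) \<omega>
               - tilde_mu mu i T h (pulls I i (t - 1) \<omega>)\<bar>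
              > check_beta \<sigma> a T h (pulls I i (t - 1) \<omega>)" by blast
    define n where "n = pulls I i (t - 1) \<omega>"
    have nT: "n < T" using pulls_le[of I i "t - 1" \<omega>] t unfolding n_def by simp arith
    have nN: "n \<le> pulls I i (T - 1) \<omega>" unfolding n_def by (rule pulls_mono) (use t in auto)
    have "check_mu mu I eta i T h n \<omega> - tilde_mu mu i T h n = DD (cfun T h n) (T - 1) \<omega>"
      unfolding DD_eq using Zeq[of h n, OF h1[folded n_def] h2 nN] .
    then have "\<bar>DD (cfun T h n) (T - 1) \<omega>\<bar> > check_beta \<sigma> a T h n" using gt by (simp add: n_def)
    then have "\<omega> \<in> E n" unfolding E_def DD_neg using \<omega> by auto
    moreover have "n \<in> NN" using nT h1 by (simp add: NN_def n_def)
    ultimately show "\<omega> \<in> (\<Union>n\<in>NN. E n)" by blast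
  qed
  have bound: "measure M (E n) \<le> 2 * exp (- a / 10)" if n: "n \<in> NN" for n
  proof -
    have nT: "n < T" and h1: "1 \<le> h n" using n by (auto simp: NN_def)
    define Dn where "Dn = real T - real n + real (h n) - 1"
    define C where "C = 5 * Dn\<^sup>2 / real (h n) ^ 3"
    have Dh: "real (h n) \<le> Dn" using nT by (simp add: Dn_def)
    have hpos: "0 < real (h n)" using h1 by simp
    have Cpos: "0 < C" using Dh hpos by (simp add: C_def)
    have V: "VV c (T - 1) \<omega> \<le> C" if "c = cfun T h n \<or> c = (\<lambda>k. - cfun T h n k)" for c \<omega>
    proof -
      have "VV (cfun T h n) (T - 1) \<omega> \<le> (\<Sum>k\<in>{1..n}. (cfun T h n k)\<^sup>2)"
        by (rule VV_le) (rule cfun_zero)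
      also have "\<dots> \<le> C" unfolding C_def Dn_def by (rule cfun_sq[of h n, OF h1 h2 nT])
      finally show ?thesis using that VV_neg by metis
    qed
    have \<beta>: "0 \<le> check_beta \<sigma> a T h n"
      unfolding check_beta_def Dn_def[symmetric] using sigma_nonneg Dh hpos a_pos
      by (intro mult_nonneg_nonneg) auto
    have eq: "(check_beta \<sigma> a T h n)\<^sup>2 = 2 * \<sigma>\<^sup>2 * C * (a / 10)"
    proof -
      have sq: "(sqrt (a / real (h n) ^ 3))\<^sup>2 = a / real (h n) ^ 3" using a_pos hpos by simp
      have "(check_beta \<sigma> a T h n)\<^sup>2 = \<sigma>\<^sup>2 * Dn\<^sup>2 * (sqrt (a / real (h n) ^ 3))\<^sup>2"
        unfolding check_beta_def Dn_def[symmetric] by (simp only: power_mult_distrib)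
      also have "\<dots> = \<sigma>\<^sup>2 * Dn\<^sup>2 * (a / real (h n) ^ 3)" by (simp only: sq)
      also have "\<dots> = 2 * \<sigma>\<^sup>2 * C * (a / 10)" unfolding C_def by simp
      finally show ?thesis .
    qed
    have m1: "measure M {\<omega>\<in>space M. check_beta \<sigma> a T h n < DD (cfun T h n) (T - 1) \<omega>} \<le> exp (- (a / 10))"
      by (rule tail_final[OF V Cpos \<beta> sigma_nonneg eq]) simp
    have m2: "measure M {\<omega>\<in>space M. check_beta \<sigma> a T h n < DD (\<lambda>k. - cfun T h n k) (T - 1) \<omega>} \<le> exp (- (a / 10))"
      by (rule tail_final[OF V Cpos \<beta> sigma_nonneg eq]) simp
    have "measure M (E n) \<le> measure M {\<omega>\<in>space M. check_beta \<sigma> a T h n < DD (cfun T h n) (T - 1) \<omega>}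
        + measure M {\<omega>\<in>space M. check_beta \<sigma> a T h n < DD (\<lambda>k. - cfun T h n k) (T - 1) \<omega>}"
    proof -
      note [measurable] = DD_measM
      have A1: "{\<omega>\<in>space M. check_beta \<sigma> a T h n < DD (cfun T h n) (T - 1) \<omega>} \<in> sets M"
        by measurable
      have A2: "{\<omega>\<in>space M. check_beta \<sigma> a T h n < DD (\<lambda>k. - cfun T h n k) (T - 1) \<omega>} \<in> sets M"
        by measurable
      show ?thesis unfolding E_def by (rule measure_Un_le[OF A1 A2])
    qed
    then show ?thesis using m1 m2 by simp
  qed
  have "measure M ?S \<le> measure M (\<Union>n\<in>NN. E n)"
    by (rule P.finite_measure_mono[OF sub]) (use Em finN in auto)
  also have "\<dots> \<le> (\<Sum>n\<in>NN. measure M (E n))"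
    by (rule P.finite_measure_subadditive_finite[OF finN]) (use Em in auto)
  also have "\<dots> \<le> (\<Sum>n\<in>NN. 2 * exp (- a / 10))" by (rule sum_mono) (rule bound)
  also have "\<dots> = real (card NN) * (2 * exp (- a / 10))" by simp
  also have "\<dots> \<le> real T * (2 * exp (- a / 10))"
    by (rule mult_right_mono) (use cardN in auto)
  finally show ?thesis by simp
qed

end
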